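(* Let $G$ be a finite abelian group of order $n$, let $\hat G=\{\psi_1,\dots,\psi_n\}$ be its dual group, and for $\chi\in\hat G^n$ let $a_i$ be the number of coordinates of $\chi$ equal to $\psi_i$ (so $a_1+\cdots+a_n=n$). Let $H=H(\chi)=\frac1n\log\binom{n}{a_1,\dots,a_n}$. If $H\ge(\log n)^{-100}$ then \[ H=\Big(1+O\Big(\frac{\log\log n}{\log n}\Big)\Big)\sum_{i=1}^n\frac{a_i}{n}\log\frac{n}{a_i}, \] where terms with $a_i=0$ are interpreted as $0$ and the implied constant is absolute.
   Context: $\binom{n}{a_1,\dots,a_n}=\frac{n!}{a_1!\cdots a_n!}$ is the multinomial coefficient. *)

theory Defs
  imports Complex_Main
begin

text \<open>The multiplicities a_1,...,a_n are given as a function a on {1..n}.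
  Multinomial coefficient n!/(a_1! ... a_n!) as a real number.\<close>
definition multinomial :: "nat \<Rightarrow> (nat \<Rightarrow> nat) \<Rightarrow> real" where
  "multinomial n a = fact n / (\<Prod>i\<in>{1..n}. fact (a i))"

definition Hent :: "nat \<Rightarrow> (nat \<Rightarrow> nat) \<Rightarrow> real" where
  "Hent n a = ln (multinomial n a) / real n"

definition Sent :: "nat \<Rightarrow> (nat \<Rightarrow> nat) \<Rightarrow> real" where
  "Sent n a = (\<Sum>i\<in>{1..n}. if a i = 0 then 0
                 else real (a i) / real n * ln (real n / real (a i)))"

end

theory Submission
  imports Defs
begin

definition lF :: "nat \<Rightarrow> real" where
  "lF m = real m * ln (real m) - ln (fact m)"

lemma lF0: "lF 0 = 0" by (simp add: lF_def)

lemma lF_superadd: "lF a + lF b \<le> lF (a + b)"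
proof (cases "a = 0 \<or> b = 0")
  case True then show ?thesis by (auto simp: lF0)
next
  case False
  then have a0: "a > 0" and b0: "b > 0" by auto
  have "real (a + b choose a) * real a ^ a * real b ^ (a + b - a)
        \<le> (\<Sum>k\<le>a+b. real (a + b choose k) * real a ^ k * real b ^ (a + b - k))"
    by (rule member_le_sum) auto
  also have "\<dots> = (real a + real b) ^ (a + b)"
    by (simp add: binomial_ring)
  finally have ineq: "real (a + b choose a) * real a ^ a * real b ^ b \<le> (real a + real b) ^ (a + b)"
    by simp
  have cpos: "real (a + b choose a) > 0" by simp
  have "ln (real (a + b choose a) * real a ^ a * real b ^ b) \<le> ln ((real a + real b) ^ (a + b))"
    using ineq cpos a0 b0 by (subst ln_le_cancel_iff) auto
  then have "ln (real (a + b choose a)) + real a * ln a + real b * ln b \<le> real (a+b) * ln (real a + real b)"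
    using cpos a0 b0 by (simp add: ln_mult ln_realpow)
  moreover have "real (a + b choose a) = fact (a+b) / (fact a * fact b)"
    using binomial_fact[of a "a+b", where 'a=real] by simp
  moreover have "ln (fact (a+b) / (fact a * fact b) :: real) = ln (fact (a+b)) - ln (fact a) - ln (fact b)"
    by (simp add: ln_div ln_mult)
  ultimately show ?thesis by (simp add: lF_def algebra_simps)
qed

lemma lF_step: "lF (Suc m) - lF m = real m * (ln (real m + 1) - ln (real m))"
proof (cases "m = 0")
  case True then show ?thesis by (simp add: lF_def)
next
  case False
  have "ln (fact (Suc m) :: real) = ln (real m + 1) + ln (fact m)"
    by (simp add: ln_mult add.commute)
  then show ?thesis by (simp add: lF_def algebra_simps)
qed

lemma lF_step_le: "lF (Suc m) - lF m \<le> 1"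
proof (cases "m = 0")
  case True then show ?thesis by (simp add: lF_step)
next
  case False
  have "ln (real m + 1) - ln (real m) = ln ((real m + 1) / real m)"
    using False by (simp add: ln_div)
  also have "\<dots> \<le> (real m + 1) / real m - 1" by (rule ln_le_minus_one) (use False in auto)
  also have "\<dots> = 1 / real m" using False by (simp add: field_simps)
  finally have "real m * (ln (real m + 1) - ln (real m)) \<le> real m * (1 / real m)"
    by (rule mult_left_mono) auto
  then show ?thesis using False by (simp add: lF_step)
qed

lemma lF_step_ge: "lF (Suc m) - lF m \<ge> real m / (real m + 1)"
proof (cases "m = 0")
  case True then show ?thesis by (simp add: lF_step)
next
  case False
  have "ln (real m / (real m + 1)) \<le> real m / (real m + 1) - 1"
    by (rule ln_le_minus_one) (use False in auto)
  also have "\<dots> = - 1 / (real m + 1)" by (simp add: field_simps)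
  finally have "ln (real m) - ln (real m + 1) \<le> - 1 / (real m + 1)"
    using False by (simp add: ln_div)
  then have "1 / (real m + 1) \<le> ln (real m + 1) - ln (real m)" by simp
  then have "real m * (1 / (real m + 1)) \<le> real m * (ln (real m + 1) - ln (real m))"
    by (rule mult_left_mono) auto
  then show ?thesis by (simp add: lF_step)
qed

lemma lF_diff_le: "M \<le> n \<Longrightarrow> lF n - lF M \<le> real n - real M"
proof (induction n rule: dec_induct)
  case base then show ?case by simp
next
  case (step k)
  then show ?case using lF_step_le[of k] by simp
qed

lemma sqrt_step: "1 / (real m + 1) \<le> 2 * (sqrt (real m + 1) - sqrt (real m))"
proof -
  define S where "S = sqrt (real m + 1) + sqrt (real m)"
  have p: "(sqrt (real m + 1) - sqrt (real m)) * S = 1"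
    by (simp add: S_def algebra_simps)
  have s1: "sqrt (real m) \<le> sqrt (real m + 1)" by simp
  have s2: "sqrt (real m + 1) \<le> real m + 1"
  proof -
    have "real m + 1 \<le> (real m + 1)^2" by (simp add: power2_eq_square algebra_simps)
    then have "sqrt (real m + 1) \<le> sqrt ((real m + 1)^2)" by (subst real_sqrt_le_iff) 
    then show ?thesis by simp
  qed
  have "S \<le> sqrt (real m + 1) + sqrt (real m + 1)" unfolding S_def using s1 by (rule add_left_mono)
  also have "\<dots> \<le> (real m + 1) + (real m + 1)" using s2 s2 by (rule add_mono)
  finally have Sle: "S \<le> 2 * (real m + 1)" by simp
  have Spos: "S > 0" unfolding S_def
    by (simp add: add_pos_nonneg)
  have d: "sqrt (real m + 1) - sqrt (real m) = 1 / S" using p Spos by (simp add: field_simps)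
  have "1 / (2 * (real m + 1)) \<le> 1 / S" using Sle Spos by (intro frac_le) auto
  then show ?thesis using d by (simp add: field_simps)
qed

lemma g_bound: "real m - lF m \<le> 2 * sqrt (real m)"
proof (induction m)
  case 0 then show ?case by (simp add: lF0)
next
  case (Suc m)
  have "real m / (real m + 1) = 1 - 1 / (real m + 1)" by (simp add: field_simps)
  then show ?case using Suc lF_step_ge[of m] sqrt_step[of m] by (simp add: add.commute)
qed

lemma lF_superadd_sum: "finite I \<Longrightarrow> (\<Sum>i\<in>I. lF (a i)) \<le> lF (\<Sum>i\<in>I. a i)"
proof (induction I rule: finite_induct)
  case empty then show ?case by (simp add: lF0)
next
  case (insert x F)
  then show ?case using lF_superadd[of "a x" "sum a F"] by simp
qed

lemma lnln_ge1: assumes "real n \<ge> 27" shows "ln (ln (real n)) \<ge> 1"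
proof -
  have "exp 1 \<le> (3::real)" using exp_le by simp
  have e3: "exp (3::real) \<le> 27"
  proof -
    have "exp (3::real) = exp 1 ^ 3" by (simp add: exp_of_nat_mult[symmetric])
    also have "\<dots> \<le> 3 ^ 3" using \<open>exp 1 \<le> 3\<close> by (intro power_mono) auto
    finally show ?thesis by simp
  qed
  have "ln (real n) \<ge> 3"
  proof -
    have "ln (exp 3) \<le> ln (real n)" using e3 assms by (subst ln_le_cancel_iff) auto
    then show ?thesis by simp
  qed
  then have "exp 1 \<le> ln (real n)" using \<open>exp 1 \<le> 3\<close> by linarith
  moreover have "0 < ln (real n)" using \<open>exp 1 \<le> ln (real n)\<close> exp_gt_zero[of 1] by linarith
  ultimately have "ln (exp 1) \<le> ln (ln (real n))" by (subst ln_le_cancel_iff) auto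
  then show ?thesis by simp
qed

lemma ln_le_root4: assumes "real n \<ge> 2^24" shows "ln (real n) \<le> sqrt (sqrt (real n))"
proof -
  define y where "y = sqrt (sqrt (real n))"
  have "y ^ 4 = (y ^ 2) ^ 2" by (simp flip: power_mult)
  also have "y ^ 2 = sqrt (real n)" by (simp add: y_def)
  also have "(sqrt (real n)) ^ 2 = real n" by simp
  finally have y4: "y ^ 4 = real n" .
  have "(64::real) ^ 4 \<le> y ^ 4" using assms y4 by simp
  then have y64: "y \<ge> 64"
  proof (rule contrapos_pp)
    assume "\<not> y \<ge> 64"
    then have "y ^ 4 < 64 ^ 4" by (intro power_strict_mono) (auto simp: y_def)
    then show "\<not> (64::real) ^ 4 \<le> y ^ 4" by simp
  qed
  have ypos: "y > 0" using y64 by simp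
  have "ln (y ^ 4) = 4 * ln y" using ypos by (simp add: ln_realpow)
  then have "ln (real n) = 4 * ln y" using y4 by simp
  also have "ln y = 2 * ln (sqrt y)" using ypos by (simp add: ln_sqrt)
  also have "ln (sqrt y) \<le> sqrt y - 1" using ypos by (intro ln_le_minus_one) auto
  also have "sqrt y \<le> y / 8"
  proof -
    have s64: "sqrt (64::real) = 8" by (rule real_sqrt_unique) auto
    have "sqrt 64 \<le> sqrt y" using y64 by (subst real_sqrt_le_iff)
    then have "8 \<le> sqrt y" using s64 by simp
    then have "8 * sqrt y \<le> sqrt y * sqrt y" using ypos by (intro mult_right_mono) auto
    also have "\<dots> = y" using ypos by simp
    finally show ?thesis by simp
  qed
  finally show ?thesis unfolding y_def by simp
qed

lemma per_term:
  assumes n: "real n \<ge> 2^24" and a1: "1 \<le> a" and a2: "2 * a \<le> n"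
  shows "2 * sqrt (real a) \<le> 4 * (ln (ln (real n)) / ln (real n)) * (real a * ln (real n / real a))"
proof -
  define L where "L = ln (real n)"
  define l where "l = ln (ln (real n))"
  have l1: "l \<ge> 1" unfolding l_def using n by (intro lnln_ge1) simp
  have npos: "real n > 0" using n by simp
  have apos: "real a > 0" using a1 by simp
  have Lpos: "L > 0" unfolding L_def using n by simp
  have sqa: "sqrt (real a) \<le> real a"
  proof -
    have "real a \<le> real a ^ 2" using a1 by (simp add: power2_eq_square)
    then have "sqrt (real a) \<le> sqrt (real a ^ 2)" by (subst real_sqrt_le_iff)
    then show ?thesis by simp
  qed
  have lnq: "ln (real n / real a) = L - ln (real a)" unfolding L_def using npos apos by (simp add: ln_div)
  show ?thesis
  proof (cases "a * a \<le> n")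
    case True
    then have "real a ^ 2 \<le> real n" by (simp add: power2_eq_square flip: of_nat_mult)
    then have "ln (real a ^ 2) \<le> L" unfolding L_def using apos npos by (subst ln_le_cancel_iff) auto
    then have "2 * ln (real a) \<le> L" using apos by (simp add: ln_realpow)
    then have q: "ln (real n / real a) \<ge> L / 2" using lnq by simp
    have "real a \<le> l * real a" using l1 apos by (intro mult_right_mono[of 1 l, simplified]) auto
    then have "2 * sqrt (real a) \<le> 2 * l * real a" using sqa by simp
    also have "\<dots> = 4 * (l / L) * (real a * (L / 2))" using Lpos by (simp add: field_simps)
    also have "\<dots> \<le> 4 * (l / L) * (real a * ln (real n / real a))"
      using q l1 Lpos apos by (intro mult_left_mono) auto
    finally show ?thesis unfolding l_def L_def .
  next
    case False
    then have "real n \<le> real a ^ 2" by (simp add: power2_eq_square flip: of_nat_mult)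
    then have "sqrt (real n) \<le> sqrt (real a ^ 2)" by (subst real_sqrt_le_iff)
    then have "sqrt (real n) \<le> real a" using apos by simp
    then have sa: "sqrt (sqrt (real n)) \<le> sqrt (real a)" by simp
    have LL: "L \<le> sqrt (real a)" unfolding L_def using ln_le_root4[OF n] sa by linarith
    have ln2: "ln (2::real) \<ge> 1/2"
    proof -
      have "ln (1/2::real) \<le> 1/2 - 1" by (intro ln_le_minus_one) auto
      then show ?thesis by (simp add: ln_div)
    qed
    have "2 \<le> real n / real a" using a2 apos by (simp add: field_simps flip: of_nat_mult) 
    then have "ln 2 \<le> ln (real n / real a)" using apos npos by (subst ln_le_cancel_iff) auto
    then have q: "ln (real n / real a) \<ge> 1/2" using ln2 by linarith
    have "2 * sqrt (real a) * L \<le> 2 * sqrt (real a) * sqrt (real a)" using LL by (intro mult_left_mono) auto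
    also have "\<dots> = 2 * real a" using apos by simp
    finally have k: "2 * sqrt (real a) \<le> 2 * real a / L" using Lpos by (simp add: field_simps)
    also have "\<dots> = 4 * (1 / L) * (real a * (1/2))" by simp
    also have "\<dots> \<le> 4 * (l / L) * (real a * ln (real n / real a))"
      using q l1 Lpos apos by (intro mult_mono mult_left_mono divide_right_mono) auto
    finally show ?thesis unfolding l_def L_def .
  qed
qed

lemma main_bound:
  assumes n: "real n \<ge> 2^24" and sa: "(\<Sum>i\<in>{1..n}. a i) = n"
  shows "\<bar>Hent n a - Sent n a\<bar> \<le> 4 * (ln (ln (real n)) / ln (real n)) * Sent n a"
proof -
  define I where "I = {1..n}"
  define c where "c = 4 * (ln (ln (real n)) / ln (real n))"
  define t where "t i = (if a i = 0 then 0 else real (a i) * ln (real n / real (a i)))" for i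
  have npos: "real n > 0" using n by simp
  have n1: "n \<ge> 1" using npos by simp
  have finI: "finite I" unfolding I_def by simp
  have sa': "(\<Sum>i\<in>I. real (a i)) = real n" using sa unfolding I_def by (simp flip: of_nat_sum)
  have ai_le: "a i \<le> n" if "i \<in> I" for i
    using member_le_sum[of i I a] that finI sa unfolding I_def by simp
  have lnpos: "ln (real n) > 0" using n by simp
  have "ln (ln (real n)) \<ge> 1" by (rule lnln_ge1) (use n in simp)
  then have l0: "ln (ln (real n)) \<ge> 0" by linarith
  have c0: "c \<ge> 0" unfolding c_def
    by (intro mult_nonneg_nonneg divide_nonneg_nonneg) (use l0 lnpos in linarith)+
  have t0: "t i \<ge> 0" if "i \<in> I" for i
    using ai_le[OF that] npos by (auto simp: t_def)
  have Sent_eq: "Sent n a = (\<Sum>i\<in>I. t i) / real n"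
    unfolding Sent_def I_def t_def by (subst sum_divide_distrib) (rule sum.cong, auto)
  have t_eq: "t i = real (a i) * ln (real n) - real (a i) * ln (real (a i))" for i
    using npos by (auto simp: t_def ln_div algebra_simps)
  have sumt: "(\<Sum>i\<in>I. t i) = real n * ln (real n) - (\<Sum>i\<in>I. real (a i) * ln (real (a i)))"
    by (simp add: t_eq sum_subtractf sa' flip: sum_distrib_right)
  have prodpos: "(\<Prod>i\<in>I. fact (a i) :: real) > 0" by (intro prod_pos) auto
  have "ln (multinomial n a) = ln (fact n) - ln (\<Prod>i\<in>I. fact (a i) :: real)"
    unfolding multinomial_def I_def[symmetric] using prodpos by (simp add: ln_div)
  also have "ln (\<Prod>i\<in>I. fact (a i) :: real) = (\<Sum>i\<in>I. ln (fact (a i)))"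
    using finI by (intro ln_prod) auto
  finally have nH: "real n * Hent n a = ln (fact n) - (\<Sum>i\<in>I. ln (fact (a i)))"
    unfolding Hent_def using npos by simp
  define D where "D = (\<Sum>i\<in>I. t i) - real n * Hent n a"
  have D_eq: "D = lF n - (\<Sum>i\<in>I. lF (a i))"
    unfolding D_def sumt nH lF_def by (simp add: sum_subtractf)
  have D0: "D \<ge> 0"
    using lF_superadd_sum[OF finI, of a] sa unfolding D_eq I_def by simp
  have "Max (a ` I) \<in> a ` I" using finI n1 unfolding I_def by (intro Max_in) auto
  then obtain i0 where i0: "i0 \<in> I" "a i0 = Max (a ` I)" by auto
  have i0max: "a i \<le> a i0" if "i \<in> I" for i using i0 finI that by simp
  define J where "J = I - {i0}"
  have finJ: "finite J" unfolding J_def using finI by simp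
  have split_lF: "(\<Sum>i\<in>I. lF (a i)) = lF (a i0) + (\<Sum>i\<in>J. lF (a i))"
    unfolding J_def using finI i0 by (simp add: sum.remove)
  have split_a: "(\<Sum>i\<in>I. real (a i)) = real (a i0) + (\<Sum>i\<in>J. real (a i))"
    unfolding J_def using finI i0 by (simp add: sum.remove)
  have "lF n - lF (a i0) \<le> real n - real (a i0)" using ai_le[OF i0(1)] by (rule lF_diff_le)
  also have "\<dots> = (\<Sum>i\<in>J. real (a i))" using split_a sa' by simp
  finally have "D \<le> (\<Sum>i\<in>J. real (a i)) - (\<Sum>i\<in>J. lF (a i))"
    unfolding D_eq split_lF by simp
  also have "\<dots> = (\<Sum>i\<in>J. real (a i) - lF (a i))" by (simp add: sum_subtractf)
  also have "\<dots> \<le> (\<Sum>i\<in>J. c * t i)"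
  proof (rule sum_mono)
    fix i assume iJ: "i \<in> J"
    then have iI: "i \<in> I" and ne: "i \<noteq> i0" unfolding J_def by auto
    have "a i + a i0 = sum a {i, i0}" using ne by simp
    also have "\<dots> \<le> sum a I" using iI i0(1) finI by (intro sum_mono2) auto
    finally have "2 * a i \<le> n" using i0max[OF iI] sa unfolding I_def by simp
    show "real (a i) - lF (a i) \<le> c * t i"
    proof (cases "a i = 0")
      case True then show ?thesis by (simp add: lF0 t_def)
    next
      case False
      have "real (a i) - lF (a i) \<le> 2 * sqrt (real (a i))" by (rule g_bound)
      also have "\<dots> \<le> c * t i" unfolding c_def t_def using False
        per_term[OF n _ \<open>2 * a i \<le> n\<close>] by simp
      finally show ?thesis .
    qed
  qed
  also have "\<dots> \<le> (\<Sum>i\<in>I. c * t i)"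
    unfolding J_def using finI t0 c0 by (intro sum_mono2) auto
  also have "\<dots> = c * (\<Sum>i\<in>I. t i)" by (simp add: sum_distrib_left)
  finally have Dle: "D \<le> c * (\<Sum>i\<in>I. t i)" .
  have diff: "Sent n a - Hent n a = D / real n"
    unfolding D_def Sent_eq using npos by (simp add: field_simps)
  have "D / real n \<ge> 0" using D0 npos by simp
  then have "\<bar>Hent n a - Sent n a\<bar> = D / real n" using diff by linarith
  also have "\<dots> \<le> c * (\<Sum>i\<in>I. t i) / real n" using Dle npos by (simp add: divide_right_mono)
  also have "\<dots> = c * Sent n a" unfolding Sent_eq by simp
  finally show ?thesis unfolding c_def .
qed

theorem lemma5p1:
  shows "\<exists>C N0. \<forall>n::nat \<ge> N0. \<forall>a::nat \<Rightarrow> nat.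
           (\<Sum>i\<in>{1..n}. a i) = n \<longrightarrow>
           Hent n a \<ge> ln (real n) powr (-100) \<longrightarrow>
           \<bar>Hent n a - Sent n a\<bar> \<le> C * (ln (ln (real n)) / ln (real n)) * Sent n a"
proof -
  have "\<forall>n::nat \<ge> 2^24. \<forall>a::nat \<Rightarrow> nat.
           (\<Sum>i\<in>{1..n}. a i) = n \<longrightarrow>
           Hent n a \<ge> ln (real n) powr (-100) \<longrightarrow>
           \<bar>Hent n a - Sent n a\<bar> \<le> 4 * (ln (ln (real n)) / ln (real n)) * Sent n a"
  proof (intro allI impI)
    fix n :: nat and a :: "nat \<Rightarrow> nat"
    assume A: "n \<ge> 2^24" "(\<Sum>i\<in>{1..n}. a i) = n"
    have "real n \<ge> 2^24" using A(1) by (metis of_nat_le_iff of_nat_numeral of_nat_power)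
    then show "\<bar>Hent n a - Sent n a\<bar> \<le> 4 * (ln (ln (real n)) / ln (real n)) * Sent n a"
      using A(2) by (rule main_bound)
  qed
  then show ?thesis by blast
qed

end
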